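(* Let $t>0$ and $k>1$ be constants, and let $p_0,p_1,p_2,p_3$ be real numbers with $0<p_i<1$ and $\sum_{i=0}^{3}p_i=1$. Define $T(n,r)$ for real $n\ge 0$ and integers $r\ge 0$ by $$T(n,r)=\begin{cases}1 & \text{if } n\le t k^r,\\ 1+\sum_{i=0}^{3} T\big(p_i(n-tk^r),\,r+1\big) & \text{if } n> t k^r.\end{cases}$$ Then, as $N\to\infty$, $T(N,0)\in\Theta(N^s)$, where $s$ is the real solution of $\sum_{i=0}^{3}p_i^s=k^s$.
   Context: $T(N,0)$ is the asymptotic space (number of counters) used by a DN-tree with parameters $k$ and $t$ after recording $N$ extent accesses: a tree vertex at level $r$ saturates at threshold $tk^r$, after which further accesses are distributed among its four children with probabilities $p_0,\dots,p_3$ (an R-MAT-type distribution). The parameters $t,k,p_i$ are fixed as $N\to\infty$. *)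

theory Defs
  imports Complex_Main "HOL-Library.Landau_Symbols"
begin

definition valid_params :: "real \<Rightarrow> real \<Rightarrow> (nat \<Rightarrow> real) \<Rightarrow> bool" where
  "valid_params t k p \<longleftrightarrow> t > 0 \<and> k > 1 \<and> (\<forall>i<4. 0 < p i \<and> p i < 1)"

text \<open>The space recurrence T(n,r); the guard on the parameters only serves to make the
  function total (termination), it is vacuous under the theorem's hypotheses.\<close>
function T :: "real \<Rightarrow> real \<Rightarrow> (nat \<Rightarrow> real) \<Rightarrow> real \<Rightarrow> nat \<Rightarrow> real" where
  "T t k p n r =
     (if n \<le> t * k ^ r \<or> \<not> valid_params t k p then 1
      else 1 + T t k p (p 0 * (n - t * k ^ r)) (Suc r)
             + T t k p (p 1 * (n - t * k ^ r)) (Suc r)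
             + T t k p (p 2 * (n - t * k ^ r)) (Suc r)
             + T t k p (p 3 * (n - t * k ^ r)) (Suc r))"
  by pat_completeness auto

lemma T_term_aux:
  assumes v: "valid_params t k p" and i: "i < 4" and n: "\<not> n \<le> t * k ^ r"
  shows "nat \<lceil>p i * (n - t * k ^ r) / (t * k ^ Suc r)\<rceil> < nat \<lceil>n / (t * k ^ r)\<rceil>"
proof -
  from v have t: "t > 0" and k: "k > 1" and p0: "0 < p i" and p1: "p i < 1"
    using i by (auto simp: valid_params_def)
  define c where "c = t * k ^ r"
  have c: "c > 0" using t k by (simp add: c_def)
  define m where "m = n / c"
  have m: "m > 1" using n c by (simp add: m_def c_def[symmetric] less_divide_eq)
  have n_eq: "n - t * k ^ r = c * (m - 1)"
    using c by (simp add: m_def c_def[symmetric] right_diff_distrib)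
  have ck: "t * k ^ Suc r = c * k" by (simp add: c_def)
  have eq: "p i * (n - t * k ^ r) / (t * k ^ Suc r) = p i * (m - 1) / k"
    unfolding n_eq ck using c by simp
  have "p i * (m - 1) / k < m - 1"
  proof -
    have "p i * (m - 1) < m - 1" using p1 m by simp
    also have "m - 1 \<le> k * (m - 1)" using k m by simp
    finally show ?thesis using k by (simp add: field_simps)
  qed
  hence "\<lceil>p i * (m - 1) / k\<rceil> \<le> \<lceil>m - 1\<rceil>" by (intro ceiling_mono) simp
  hence "\<lceil>p i * (m - 1) / k\<rceil> < \<lceil>m\<rceil>" by simp
  moreover have "p i * (m - 1) / k > 0" using p0 m k by simp
  hence "\<lceil>p i * (m - 1) / k\<rceil> \<ge> 0" by linarith
  ultimately have "\<lceil>p i * (m - 1) / k\<rceil> < \<lceil>m\<rceil>" "0 \<le> \<lceil>p i * (m - 1) / k\<rceil>" by auto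
  hence "nat \<lceil>p i * (m - 1) / k\<rceil> < nat \<lceil>m\<rceil>" by linarith
  thus ?thesis unfolding eq m_def c_def .
qed

termination
  apply (relation "measure (\<lambda>(t, k, p, n, r). nat \<lceil>n / (t * k ^ r)\<rceil>)")
  apply (simp_all only: wf_measure in_measure prod.case de_Morgan_disj not_not)
  apply (rule T_term_aux; simp)+
  done

end

theory Submission
  imports Defs
begin

declare T.simps[simp del]

lemma sum4: "(\<Sum>i<4. f i) = f 0 + f 1 + f 2 + f (3::nat)"
  by (simp add: eval_nat_numeral)

lemma subadd_powr:
  fixes a b s :: real
  assumes "a \<ge> 0" "b \<ge> 0" "0 < s" "s \<le> 1"
  shows "(a + b) powr s \<le> a powr s + b powr s"
proof (cases "a + b = 0")
  case True thus ?thesis using assms by auto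
next
  case False
  hence ab: "a + b > 0" using assms by linarith
  have h1: "x / (a+b) \<le> (x/(a+b)) powr s"
    if "0 \<le> x" "x \<le> a + b" for x :: real
  proof (cases "x = 0")
    case True thus ?thesis by simp
  next
    case False
    hence "0 < x/(a+b)" using that ab by auto
    moreover have "x/(a+b) \<le> 1" using that ab by simp
    ultimately have "(x/(a+b)) powr 1 \<le> (x/(a+b)) powr s"
      using assms by (intro powr_mono') auto
    thus ?thesis using \<open>0 < x/(a+b)\<close> that ab by simp
  qed
  have "1 = a/(a+b) + b/(a+b)" using ab by (simp add: add_divide_distrib[symmetric])
  also have "\<dots> \<le> (a/(a+b)) powr s + (b/(a+b)) powr s"
    using h1[of a] h1[of b] assms by auto
  also have "\<dots> = (a powr s + b powr s) / (a+b) powr s"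
    using assms ab by (simp add: powr_divide add_divide_distrib)
  finally show ?thesis using ab by (simp add: field_simps)
qed

lemma child_eq:
  fixes t k p n :: real
  assumes "t > 0" "k > 0"
  shows "p * (n - t * k ^ r) / (t * k ^ Suc r) = (p / k) * (n / (t * k ^ r) - 1)"
proof -
  have "k ^ r > 0" using assms by simp
  thus ?thesis using assms by (simp add: field_simps)
qed

lemma T_unfold:
  assumes v: "valid_params t k p" and n: "\<not> n \<le> t * k ^ r"
  shows "T t k p n r = 1 + T t k p (p 0 * (n - t * k ^ r)) (Suc r)
             + T t k p (p 1 * (n - t * k ^ r)) (Suc r)
             + T t k p (p 2 * (n - t * k ^ r)) (Suc r)
             + T t k p (p 3 * (n - t * k ^ r)) (Suc r)"
  using v n by (subst T.simps) simp

lemma T_base: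
  assumes n: "n \<le> t * k ^ r"
  shows "T t k p n r = 1"
  using n by (subst T.simps) simp

lemma T_lower:
  fixes t k s :: real and p :: "nat \<Rightarrow> real"
  assumes v: "valid_params t k p" and s: "0 < s" "s \<le> 1"
    and sp: "(\<Sum>i<4. p i powr s) = k powr s"
  shows "n \<ge> 0 \<Longrightarrow> T t k p n r \<ge> (n / (t * k ^ r)) powr s"
  using v s sp
proof (induction t k p n r rule: T.induct)
  case (1 t k p n r)
  note v = 1(6) and sp = 1(9)
  from v have t: "t > 0" and k: "k > 1" and pp: "\<And>i. i < 4 \<Longrightarrow> 0 < p i \<and> p i < 1"
    by (auto simp: valid_params_def)
  define m where "m = n / (t * k ^ r)"
  have c: "t * k ^ r > 0" using t k by simp
  show ?case
  proof (cases "n \<le> t * k ^ r")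
    case True
    hence "m \<le> 1" "m \<ge> 0" using c 1(5) by (auto simp: m_def divide_le_eq_1)
    hence "m powr s \<le> 1" using s powr_mono2[of s m 1] by simp
    thus ?thesis using T_base[OF True] by (simp add: m_def)
  next
    case False
    hence m1: "m > 1" using c by (simp add: m_def less_divide_eq_1 not_le)
    have ch: "p i * (n - t * k ^ r) / (t * k ^ Suc r) = (p i / k) * (m - 1)" for i
      unfolding m_def using child_eq t k by simp
    have IH: "T t k p (p i * (n - t * k ^ r)) (Suc r) \<ge> (p i / k) powr s * (m - 1) powr s"
      if i: "i < 4" for i
    proof -
      have pi: "p i > 0" using pp[OF i] by simp
      have "0 \<le> p i * (n - t * k ^ r)" using pi False by simp
      note h0 = this
      have d: "i = 0 \<or> i = 1 \<or> i = 2 \<or> i = 3" using i by auto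
      have "(p i * (n - t * k ^ r) / (t * k ^ Suc r)) powr s \<le> T t k p (p i * (n - t * k ^ r)) (Suc r)"
        using d 1(1-4) v s sp False h0
        by auto
      hence "T t k p (p i * (n - t * k ^ r)) (Suc r) \<ge> ((p i / k) * (m - 1)) powr s"
        using ch[of i] by simp
      moreover have "((p i / k) * (m - 1)) powr s = (p i / k) powr s * (m - 1) powr s"
        using pi k m1 by (intro powr_mult; simp)
      ultimately show ?thesis by simp
    qed
    have sq: "(\<Sum>i<4. (p i / k) powr s) = 1"
    proof -
      have "(\<Sum>i<4. (p i / k) powr s) = (\<Sum>i<4. p i powr s) / k powr s"
        using pp k by (simp add: powr_divide sum_divide_distrib)
      thus ?thesis using sp k by simp
    qed
    have "m powr s \<le> 1 + (m - 1) powr s"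
      using subadd_powr[of 1 "m - 1" s] s m1 by simp
    also have "\<dots> = 1 + (\<Sum>i<4. (p i / k) powr s * (m - 1) powr s)"
      using sq by (simp add: sum_distrib_right[symmetric])
    also have "\<dots> \<le> T t k p n r"
      using IH[of 0] IH[of 1] IH[of 2] IH[of 3] T_unfold[OF v False]
      by (simp add: sum4)
    finally show ?thesis by (simp add: m_def)
  qed
qed

lemma T_bound:
  fixes t k :: real and p :: "nat \<Rightarrow> real"
  assumes v: "valid_params t k p"
  shows "T t k p n r \<le> 5 ^ nat \<lceil>n / (t * k ^ r)\<rceil>"
  using v
proof (induction t k p n r rule: T.induct)
  case (1 t k p n r)
  note v = 1(5)
  from v have t: "t > 0" and k: "k > 1" and pp: "\<And>i. i < 4 \<Longrightarrow> 0 < p i \<and> p i < 1"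
    by (auto simp: valid_params_def)
  define m where "m = n / (t * k ^ r)"
  have c: "t * k ^ r > 0" using t k by simp
  show ?case
  proof (cases "n \<le> t * k ^ r")
    case True
    thus ?thesis using T_base[OF True] by simp
  next
    case False
    hence m1: "m > 1" using c by (simp add: m_def less_divide_eq_1 not_le)
    obtain c0 where c0: "nat \<lceil>m\<rceil> = Suc c0" using m1
      by (metis gr0_implies_Suc less_ceiling_iff nat_0_iff not_less of_int_0 zero_less_one less_trans not_gr0)
    have ch: "p i * (n - t * k ^ r) / (t * k ^ Suc r) = (p i / k) * (m - 1)" for i
      unfolding m_def using child_eq t k by simp
    have IH: "T t k p (p i * (n - t * k ^ r)) (Suc r) \<le> 5 ^ c0"
      if i: "i < 4" for i
    proof -
      have pi: "0 < p i" "p i < 1" using pp[OF i] by auto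
      have d: "i = 0 \<or> i = 1 \<or> i = 2 \<or> i = 3" using i by auto
      have "T t k p (p i * (n - t * k ^ r)) (Suc r) \<le> 5 ^ nat \<lceil>p i * (n - t * k ^ r) / (t * k ^ Suc r)\<rceil>"
        using d 1(1-4) v False by auto
      also have "\<dots> \<le> 5 ^ c0"
      proof (rule power_increasing)
        have "p i / k * (m - 1) \<le> m - 1"
        proof -
          have "p i / k \<le> 1" using pi k by simp
          thus ?thesis using m1 mult_right_mono[of "p i / k" 1 "m - 1"] by simp
        qed
        hence "\<lceil>p i / k * (m - 1)\<rceil> \<le> \<lceil>m\<rceil> - 1"
          using ceiling_mono[of "p i / k * (m - 1)" "m - 1"] by simp
        thus "nat \<lceil>p i * (n - t * k ^ r) / (t * k ^ Suc r)\<rceil> \<le> c0"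
          using c0 ch[of i] by linarith
      qed simp
      finally show ?thesis .
    qed
    have "T t k p n r \<le> 1 + 4 * 5 ^ c0"
      using IH[of 0] IH[of 1] IH[of 2] IH[of 3] T_unfold[OF v False] by simp
    also have "\<dots> \<le> 5 ^ Suc c0" using one_le_power[of "5::real" c0] by simp
    finally show ?thesis using c0 by (simp add: m_def)
  qed
qed

lemma T_upper:
  fixes t k s :: real and p :: "nat \<Rightarrow> real"
  assumes v: "valid_params t k p" and s: "0 < s" "s \<le> 1"
    and sp: "(\<Sum>i<4. p i powr s) = k powr s"
  defines "l \<equiv> min (min (p 0) (p 1)) (min (p 2) (p 3)) / k"
  defines "C \<equiv> 26 / l powr s"
  shows "n / (t * k ^ r) \<ge> l \<Longrightarrow> T t k p n r \<le> C * (n / (t * k ^ r)) powr s - 1/3"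
  using v s sp l_def C_def
proof (induction t k p n r rule: T.induct)
  case (1 t k p n r)
  note v = 1(6) and sp = 1(9) and ld = 1(10) and Cd = 1(11)
  from v have t: "t > 0" and k: "k > 1" and pp: "\<And>i. i < 4 \<Longrightarrow> 0 < p i \<and> p i < 1"
    by (auto simp: valid_params_def)
  have l0: "l > 0" using pp[of 0] pp[of 1] pp[of 2] pp[of 3] k unfolding ld by simp
  have lq: "l \<le> p i / k" if "i < 4" for i
  proof -
    have "i = 0 \<or> i = 1 \<or> i = 2 \<or> i = 3" using that by auto
    hence "min (min (p 0) (p 1)) (min (p 2) (p 3)) \<le> p i" by auto
    thus ?thesis unfolding ld using k by (simp add: divide_right_mono)
  qed
  have C0: "C > 0" using l0 Cd by simp
  have Cl: "C * l powr s = 26" using l0 Cd by simp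
  define m where "m = n / (t * k ^ r)"
  have ml: "m \<ge> l" using 1(5) by (simp add: m_def)
  have c: "t * k ^ r > 0" using t k by simp
  show ?case
  proof (cases "m \<le> 2")
    case True
    have "nat \<lceil>m\<rceil> \<le> 2" using True by linarith
    hence "T t k p n r \<le> 5 ^ 2"
      using T_bound[OF v, of n r] power_increasing[of "nat \<lceil>m\<rceil>" 2 "5::real"]
      by (simp add: m_def)
    also have "\<dots> \<le> C * l powr s - 1/3" using Cl by simp
    also have "\<dots> \<le> C * m powr s - 1/3"
      using C0 powr_mono2[of s l m] l0 ml s by simp
    finally show ?thesis by (simp add: m_def)
  next
    case False
    hence m2: "m > 2" by simp
    hence "2 * (t * k ^ r) < n" using c by (simp add: m_def less_divide_eq)
    hence nle: "\<not> n \<le> t * k ^ r" using c by linarith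
    have ch: "p i * (n - t * k ^ r) / (t * k ^ Suc r) = (p i / k) * (m - 1)" for i
      unfolding m_def using child_eq t k by simp
    have IH: "T t k p (p i * (n - t * k ^ r)) (Suc r) \<le> C * ((p i / k) powr s * (m - 1) powr s) - 1/3"
      if i: "i < 4" for i
    proof -
      have pi: "p i > 0" using pp[OF i] by simp
      have "l \<le> p i / k * 1" using lq[OF i] by simp
      also have "\<dots> \<le> p i / k * (m - 1)" using pi k m2 by (intro mult_left_mono) auto
      finally have h0: "l \<le> p i * (n - t * k ^ r) / (t * k ^ Suc r)" using ch[of i] by simp
      have d: "i = 0 \<or> i = 1 \<or> i = 2 \<or> i = 3" using i by auto
      have "T t k p (p i * (n - t * k ^ r)) (Suc r) \<le> C * (p i * (n - t * k ^ r) / (t * k ^ Suc r)) powr s - 1/3"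
        using d 1(1-4) v 1(7,8) sp ld Cd nle h0 by auto
      moreover have "((p i / k) * (m - 1)) powr s = (p i / k) powr s * (m - 1) powr s"
        using pi k m2 by (intro powr_mult; simp)
      ultimately show ?thesis using ch[of i] by simp
    qed
    have sq: "(\<Sum>i<4. (p i / k) powr s) = 1"
    proof -
      have "(\<Sum>i<4. (p i / k) powr s) = (\<Sum>i<4. p i powr s) / k powr s"
        using pp k by (simp add: powr_divide sum_divide_distrib)
      thus ?thesis using sp k by simp
    qed
    have "T t k p n r \<le> 1 + (\<Sum>i<4. C * ((p i / k) powr s * (m - 1) powr s) - 1/3)"
      using IH[of 0] IH[of 1] IH[of 2] IH[of 3] T_unfold[OF v nle] by (simp add: sum4)
    also have "\<dots> = C * (m - 1) powr s - 1/3"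
      using sq by (simp add: sum_subtractf sum_distrib_left[symmetric] sum_distrib_right[symmetric])
    also have "\<dots> \<le> C * m powr s - 1/3"
      using C0 powr_mono2[of s "m - 1" m] m2 s by simp
    finally show ?thesis by (simp add: m_def)
  qed
qed

theorem theorem1:
  fixes t k s :: real and p :: "nat \<Rightarrow> real"
  assumes "t > 0" and "k > 1"
    and "\<forall>i<4. 0 < p i \<and> p i < 1"
    and "(\<Sum>i<4. p i) = 1"
    and "(\<Sum>i<4. p i powr s) = k powr s"
  shows "(\<lambda>N. T t k p N 0) \<in> \<Theta>[at_top](\<lambda>N. N powr s)"
proof -
  note t = assms(1) and k = assms(2) and pp = assms(3) and p1 = assms(4) and sp = assms(5)
  have v: "valid_params t k p" using t k pp by (simp add: valid_params_def)
  have s0: "s > 0"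
  proof (rule ccontr)
    assume "\<not> s > 0" hence sn: "s \<le> 0" by simp
    have "1 \<le> p i powr s" if "i < 4" for i
      using powr_mono'[of s 0 "p i"] pp that sn by fastforce
    hence "(\<Sum>i<(4::nat). (1::real)) \<le> (\<Sum>i<4. p i powr s)" by (intro sum_mono) auto
    moreover have "k powr s \<le> k powr 0" using k sn by (intro powr_mono) auto
    ultimately show False using sp k by simp
  qed
  have s1: "s \<le> 1"
  proof (rule ccontr)
    assume "\<not> s \<le> 1" hence sn: "s > 1" by simp
    have "p i powr s \<le> p i" if "i < 4" for i
      using powr_mono'[of 1 s "p i"] pp that sn by fastforce
    hence "(\<Sum>i<4. p i powr s) \<le> (\<Sum>i<4. p i)" by (intro sum_mono) auto
    moreover have "k powr 1 < k powr s" using k sn by (intro powr_less_mono) auto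
    ultimately show False using sp k p1 by simp
  qed
  define l where "l = min (min (p 0) (p 1)) (min (p 2) (p 3)) / k"
  define C where "C = 26 / l powr s"
  have l0: "l > 0" using pp k unfolding l_def by simp
  have C0: "C > 0" using l0 by (simp add: C_def)
  have ts: "t powr s > 0" using t by simp
  show ?thesis
  proof (rule bigthetaI'[of "1 / t powr s" "C / t powr s"])
    show "0 < 1 / t powr s" "0 < C / t powr s" using ts C0 by auto
    have "eventually (\<lambda>N. N \<ge> max 1 (l * t)) at_top" by (rule eventually_ge_at_top)
    thus "eventually (\<lambda>N. 1 / t powr s * norm (N powr s) \<le> norm (T t k p N 0)
        \<and> norm (T t k p N 0) \<le> C / t powr s * norm (N powr s)) at_top"
    proof (rule eventually_mono)
      fix N :: real assume N: "N \<ge> max 1 (l * t)"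
      have N0: "N > 0" using N by simp
      have eq: "(N / t) powr s = N powr s / t powr s" using N0 t by (simp add: powr_divide)
      have lo: "T t k p N 0 \<ge> N powr s / t powr s"
        using T_lower[OF v s0 s1 sp, of N 0] N0 eq by simp
      have "N / t \<ge> l" using N t by (simp add: le_divide_eq)
      hence up: "T t k p N 0 \<le> C * (N powr s / t powr s) - 1/3"
        using T_upper[OF v s0 s1 sp, of N 0] eq unfolding l_def C_def by simp
      have pos: "N powr s / t powr s \<ge> 0" using ts by simp
      show "1 / t powr s * norm (N powr s) \<le> norm (T t k p N 0)
        \<and> norm (T t k p N 0) \<le> C / t powr s * norm (N powr s)"
      proof -
        have T0: "T t k p N 0 \<ge> 0" using lo pos by linarith
        have n1: "norm (T t k p N 0) = T t k p N 0" using T0 by simp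
        have n2: "norm (N powr s) = N powr s" by simp
        have "C * (N powr s / t powr s) = C / t powr s * N powr s" by simp
        moreover have "1 / t powr s * N powr s = N powr s / t powr s" by simp
        ultimately show ?thesis unfolding n1 n2 using lo up by linarith
      qed
    qed
  qed
qed

end
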